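(* Let $\omega\ge 3$ be an integer, let $\varepsilon>0$ and $c>0$ be real constants, and let $k\ge 1$. Let $G$ be a graph with $m$ edges, clique number $\omega(G)=\omega$, and $t(G)\le c\,m^{1.5-\varepsilon}$. If $m\ge \big(2.2\,c\,\omega^{2k}\big)^{1/\varepsilon}$, then \[\Lambda_\ell(G) < 2\left(\frac{\sqrt[3]{\omega}}{1+\sqrt[3]{\omega}}+\frac{1}{\omega^{k}}\right),\] where $\ell=\min\{n^+,\omega\}$.
   Context: For a simple graph $G$ on $n$ vertices and $m$ edges, let $\lambda_1\ge\lambda_2\ge\cdots\ge\lambda_n$ be the eigenvalues of its adjacency matrix $A(G)$. The inertia $(n^+,n^0,n^-)$ means $G$ has $n^+$ positive eigenvalues, eigenvalue $0$ with multiplicity $n^0$, and $n^-$ negative eigenvalues. $\omega(G)$ is the clique number and $t(G)$ the number of triangles of $G$. Define $s_k(G)=\sum_{i=1}^k\lambda_i^2$ and $\Lambda_k(G)=s_k(G)/m$. *)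

theory Defs
  imports "Jordan_Normal_Form.Char_Poly" "HOL-Computational_Algebra.Polynomial" "HOL-Library.Multiset"
begin

text \<open>A simple graph on the vertex set {0..<n}, given by an adjacency predicate E
  that is symmetric and irreflexive on the vertices (values of E outside the
  vertex set are irrelevant).\<close>

definition simple_graph :: "nat \<Rightarrow> (nat \<Rightarrow> nat \<Rightarrow> bool) \<Rightarrow> bool" where
  "simple_graph n E \<longleftrightarrow>
     (\<forall>i<n. \<forall>j<n. E i j = E j i) \<and> (\<forall>i<n. \<not> E i i)"

definition graph_edges :: "nat \<Rightarrow> (nat \<Rightarrow> nat \<Rightarrow> bool) \<Rightarrow> nat set set" where
  "graph_edges n E = {{i, j} | i j. i < n \<and> j < n \<and> E i j}"

definition num_edges :: "nat \<Rightarrow> (nat \<Rightarrow> nat \<Rightarrow> bool) \<Rightarrow> nat" where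
  "num_edges n E = card (graph_edges n E)"

definition adj_mat :: "nat \<Rightarrow> (nat \<Rightarrow> nat \<Rightarrow> bool) \<Rightarrow> real mat" where
  "adj_mat n E = mat n n (\<lambda>(i, j). if E i j then 1 else 0)"

text \<open>Adjacency eigenvalues with multiplicity, in non-increasing order:
  the list [lambda_1, ..., lambda_n] (index i of the list is lambda_(i+1)).
  For a real symmetric matrix the characteristic polynomial splits over the reals.\<close>
definition adj_eigs :: "nat \<Rightarrow> (nat \<Rightarrow> nat \<Rightarrow> bool) \<Rightarrow> real list" where
  "adj_eigs n E = rev (sorted_list_of_multiset (proots (char_poly (adj_mat n E))))"

definition n_pos :: "nat \<Rightarrow> (nat \<Rightarrow> nat \<Rightarrow> bool) \<Rightarrow> nat" where
  "n_pos n E = length (filter (\<lambda>x. x > 0) (adj_eigs n E))"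

definition is_clique :: "nat \<Rightarrow> (nat \<Rightarrow> nat \<Rightarrow> bool) \<Rightarrow> nat set \<Rightarrow> bool" where
  "is_clique n E S \<longleftrightarrow> S \<subseteq> {0..<n} \<and> (\<forall>i\<in>S. \<forall>j\<in>S. i \<noteq> j \<longrightarrow> E i j)"

definition clique_number :: "nat \<Rightarrow> (nat \<Rightarrow> nat \<Rightarrow> bool) \<Rightarrow> nat" where
  "clique_number n E = Max {card S | S. is_clique n E S}"

definition num_triangles :: "nat \<Rightarrow> (nat \<Rightarrow> nat \<Rightarrow> bool) \<Rightarrow> nat" where
  "num_triangles n E = card {S. is_clique n E S \<and> card S = 3}"

definition s_sum :: "nat \<Rightarrow> (nat \<Rightarrow> nat \<Rightarrow> bool) \<Rightarrow> nat \<Rightarrow> real" where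
  "s_sum n E k = (\<Sum>i<k. (adj_eigs n E ! i)^2)"

definition Lambda :: "nat \<Rightarrow> (nat \<Rightarrow> nat \<Rightarrow> bool) \<Rightarrow> nat \<Rightarrow> real" where
  "Lambda n E k = s_sum n E k / real (num_edges n E)"

end

theory Submission imports Defs "Jordan_Normal_Form.Schur_Decomposition" begin


lemma sym_eig_real:
  fixes A :: "real mat"
  assumes A: "A \<in> carrier_mat n n" and sym: "\<And>i j. i<n \<Longrightarrow> j<n \<Longrightarrow> A$$(i,j) = A$$(j,i)"
  and ev: "eigenvalue (map_mat complex_of_real A) \<mu>"
  shows "Im \<mu> = 0"
proof -
  let ?B = "map_mat complex_of_real A"
  obtain v where v: "v \<in> carrier_vec n" "v \<noteq> 0\<^sub>v n" "?B *\<^sub>v v = \<mu> \<cdot>\<^sub>v v"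
    using ev A unfolding eigenvalue_def eigenvector_def by auto
  have Bv: "\<And>i. i < n \<Longrightarrow> (\<Sum>j<n. complex_of_real (A$$(i,j)) * v$j) = \<mu> * v$i"
  proof -
    fix i assume i: "i < n"
    have "(?B *\<^sub>v v) $ i = (\<mu> \<cdot>\<^sub>v v) $ i" using v by simp
    moreover have "(?B *\<^sub>v v) $ i = row ?B i \<bullet> v" using i A by (simp add: index_mult_mat_vec)
    moreover have "(\<mu> \<cdot>\<^sub>v v) $ i = \<mu> * v$i" using i v by simp
    ultimately have "row ?B i \<bullet> v = \<mu> * v$i" by simp
    moreover have "row ?B i \<bullet> v = (\<Sum>j<n. complex_of_real (A$$(i,j)) * v$j)"
      using i A v unfolding scalar_prod_def by (auto simp: lessThan_atLeast0 intro: sum.cong)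
    ultimately show "(\<Sum>j<n. complex_of_real (A$$(i,j)) * v$j) = \<mu> * v$i" by simp
  qed
  define S where "S = (\<Sum>i<n. \<Sum>j<n. cnj (v$i) * complex_of_real (A$$(i,j)) * v$j)"
  have S1: "S = \<mu> * (\<Sum>i<n. complex_of_real ((cmod (v$i))^2))"
  proof -
    have "S = (\<Sum>i<n. cnj (v$i) * (\<Sum>j<n. complex_of_real (A$$(i,j)) * v$j))"
      unfolding S_def by (simp add: sum_distrib_left mult.assoc)
    also have "\<dots> = (\<Sum>i<n. \<mu> * (cnj (v$i) * v$i))" using Bv by (simp add: mult.commute mult.left_commute)
    also have "\<dots> = \<mu> * (\<Sum>i<n. complex_of_real ((cmod (v$i))^2))"
      by (simp add: sum_distrib_left, intro sum.cong refl, metis complex_norm_square of_real_power mult.commute)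
    finally show ?thesis .
  qed
  have "cnj S = (\<Sum>i<n. \<Sum>j<n. v$i * complex_of_real (A$$(i,j)) * cnj (v$j))"
    unfolding S_def by simp
  also have "\<dots> = (\<Sum>j<n. \<Sum>i<n. v$i * complex_of_real (A$$(i,j)) * cnj (v$j))"
    by (rule sum.swap)
  also have "\<dots> = S" unfolding S_def
    by (intro sum.cong refl, simp add: sym mult.commute mult.left_commute)
  finally have cS: "cnj S = S" .
  have pos: "(\<Sum>i<n. (cmod (v$i))^2) > 0"
  proof -
    obtain i where i: "i < n" "v$i \<noteq> 0" using v by (metis carrier_vecD eq_vecI index_zero_vec(1,2))
    have "(cmod (v$i))^2 \<le> (\<Sum>i<n. (cmod (v$i))^2)"
      using i by (intro member_le_sum) auto
    moreover have "(cmod (v$i))^2 > 0" using i by simp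
    ultimately show ?thesis by linarith
  qed
  define r where "r = (\<Sum>i<n. (cmod (v$i))^2)"
  have "S = \<mu> * complex_of_real r" using S1 unfolding r_def by simp
  hence "Im S = Im \<mu> * r" by simp
  moreover have "Im S = 0" using cS by (metis cnj.simps(2) neg_equal_zero complex.expand)
  ultimately show ?thesis using pos unfolding r_def by simp
qed



lemma map_poly_of_real_prod:
  "map_poly complex_of_real (\<Prod>a\<leftarrow>es. [:-a,1:]) = (\<Prod>a\<leftarrow>es. [:-complex_of_real a,1:])"
proof -
  interpret h: map_poly_comm_ring_hom "complex_of_real" ..
  show ?thesis
  proof (induct es)
    case Nil then show ?case by simp
  next
    case (Cons a es)
    have "map_poly complex_of_real [:-a,1:] = [:-complex_of_real a, 1:]" by simp
    then show ?case using Cons by (simp only: list.map prod_list.Cons h.hom_mult)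
  qed
qed

lemma sym_char_poly_split:
  fixes A :: "real mat"
  assumes A: "A \<in> carrier_mat n n" and sym: "\<And>i j. i<n \<Longrightarrow> j<n \<Longrightarrow> A$$(i,j) = A$$(j,i)"
  shows "\<exists>es. char_poly A = (\<Prod>a\<leftarrow>es. [:-a,1:]) \<and> length es = n"
proof -
  let ?B = "map_mat complex_of_real A"
  have B: "?B \<in> carrier_mat n n" using A by simp
  obtain as where as: "char_poly ?B = (\<Prod>a\<leftarrow>as. [:-a,1:])" "length as = n"
    using char_poly_factorized[OF B] by blast
  have real: "\<And>a. a \<in> set as \<Longrightarrow> Im a = 0"
  proof -
    fix a assume a: "a \<in> set as"
    have "poly (char_poly ?B) a = 0" unfolding as(1) using a
      by (simp add: poly_prod_list prod_list_zero_iff)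
    hence "eigenvalue ?B a" using eigenvalue_root_char_poly[OF B] by simp
    thus "Im a = 0" using sym_eig_real[OF A sym] by blast
  qed
  define es where "es = map Re as"
  have mm: "map (\<lambda>a. [:-complex_of_real (Re a),1:]) as = map (\<lambda>a. [:-a,1:]) as"
    using real by (auto intro!: map_cong simp: complex_eq_iff)
  hence "map_poly complex_of_real (\<Prod>a\<leftarrow>es. [:-a,1:]) = char_poly ?B"
    unfolding map_poly_of_real_prod as(1) es_def
    by (simp only: map_map o_def mm)
  also have "\<dots> = map_poly complex_of_real (char_poly A)"
    by (rule of_real_hom.char_poly_hom[OF A])
  finally have "(\<Prod>a\<leftarrow>es. [:-a,1:]) = char_poly A"
    by (simp add: poly_eq_iff)
  thus ?thesis using as(2) unfolding es_def by (metis length_map)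
qed



definition mytr :: "'a::comm_ring_1 mat \<Rightarrow> 'a" where
  "mytr M = (\<Sum>i<dim_row M. M$$(i,i))"

lemma mult_entry: assumes "M \<in> carrier_mat n m" "N \<in> carrier_mat m p" "i < n" "j < p"
  shows "(M*N)$$(i,j) = (\<Sum>l<m. M$$(i,l) * N$$(l,j))"
  using assms by (auto simp: scalar_prod_def lessThan_atLeast0 intro: sum.cong)

lemma tr_comm: assumes "M \<in> carrier_mat n n" "N \<in> carrier_mat n n"
  shows "mytr (M*N) = mytr (N*M)"
proof -
  have "mytr (M*N) = (\<Sum>i<n. (M*N)$$(i,i))" unfolding mytr_def using assms by simp
  also have "\<dots> = (\<Sum>i<n. \<Sum>l<n. M$$(i,l) * N$$(l,i))"
    by (intro sum.cong refl mult_entry[OF assms(1,2)]) auto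
  also have "\<dots> = (\<Sum>l<n. \<Sum>i<n. N$$(l,i) * M$$(i,l))"
    by (subst sum.swap) (simp add: mult.commute)
  also have "\<dots> = (\<Sum>i<n. (N*M)$$(i,i))"
    by (intro sum.cong refl mult_entry[OF assms(2,1), symmetric]) auto
  also have "\<dots> = mytr (N*M)" unfolding mytr_def using assms by simp
  finally show ?thesis .
qed

lemma ut_pow: fixes B :: "'a::comm_ring_1 mat"
  assumes B: "B \<in> carrier_mat n n" and ut: "upper_triangular B"
  shows "upper_triangular (B ^\<^sub>m k) \<and> (\<forall>i<n. (B ^\<^sub>m k)$$(i,i) = B$$(i,i)^k)"
proof (induct k)
  case 0 then show ?case using B by auto
next
  case (Suc k)
  let ?C = "B ^\<^sub>m k"
  have C: "?C \<in> carrier_mat n n" using B by simp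
  have utC: "\<And>i j. i < n \<Longrightarrow> j < i \<Longrightarrow> ?C$$(i,j) = 0" using Suc C by auto
  have utB: "\<And>i j. i < n \<Longrightarrow> j < i \<Longrightarrow> B$$(i,j) = 0" using ut B by auto
  have eq: "B ^\<^sub>m Suc k = ?C * B" by simp
  have "upper_triangular (?C * B)"
  proof
    fix i j assume i: "i < dim_row (?C * B)" and j: "j < i"
    have i': "i < n" using i C B by simp
    have "(?C*B)$$(i,j) = (\<Sum>l<n. ?C$$(i,l) * B$$(l,j))" using mult_entry[OF C B i'] j i' by simp
    also have "\<dots> = 0"
    proof (rule sum.neutral, intro ballI)
      fix l assume l: "l \<in> {..<n}"
      show "?C$$(i,l) * B$$(l,j) = 0"
      proof (cases "l < i")
        case True then show ?thesis using utC i' by simp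
      next
        case False then show ?thesis using utB l j by simp
      qed
    qed
    finally show "(?C*B)$$(i,j) = 0" .
  qed
  moreover have "\<forall>i<n. (?C*B)$$(i,i) = B$$(i,i)^Suc k"
  proof (intro allI impI)
    fix i assume i: "i < n"
    have "(?C*B)$$(i,i) = (\<Sum>l<n. ?C$$(i,l) * B$$(l,i))" using mult_entry[OF C B i i] .
    also have "\<dots> = ?C$$(i,i) * B$$(i,i) + (\<Sum>l\<in>{..<n}-{i}. ?C$$(i,l) * B$$(l,i))"
      by (rule sum.remove) (use i in auto)
    moreover have z: "(\<Sum>l\<in>{..<n}-{i}. ?C$$(i,l) * B$$(l,i)) = 0"
    proof (rule sum.neutral, intro ballI)
      fix l assume l: "l \<in> {..<n}-{i}"
      show "?C$$(i,l) * B$$(l,i) = 0"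
      proof (cases "l < i")
        case True then show ?thesis using utC i by simp
      next
        case False then show ?thesis using utB l by simp
      qed
    qed
    ultimately have "(?C*B)$$(i,i) = ?C$$(i,i) * B$$(i,i)" by simp
    also have "\<dots> = B$$(i,i)^Suc k" using Suc i by simp
    finally show "(?C*B)$$(i,i) = B$$(i,i)^Suc k" .
  qed
  ultimately show ?case unfolding eq by blast
qed

lemma tr_pow_eigs:
  fixes A :: "real mat"
  assumes A: "A \<in> carrier_mat n n" and c: "char_poly A = (\<Prod>a\<leftarrow>es. [:-a,1:])"
  shows "mytr (A ^\<^sub>m k) = (\<Sum>e\<leftarrow>es. e^k)"
proof -
  obtain B P Q where s: "schur_decomposition A es = (B,P,Q)" by (cases "schur_decomposition A es") auto
  from schur_decomposition[OF A c s] have w: "similar_mat_wit A B P Q" and ut: "upper_triangular B"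
    and d: "diag_mat B = es" by auto
  from w A have B: "B \<in> carrier_mat n n" and P: "P \<in> carrier_mat n n" and Q: "Q \<in> carrier_mat n n"
    and QP: "Q * P = 1\<^sub>m n"
    unfolding similar_mat_wit_def Let_def by auto
  have "A ^\<^sub>m k = P * B ^\<^sub>m k * Q" by (rule similar_mat_wit_pow_id[OF w])
  also have "\<dots> = P * (B ^\<^sub>m k * Q)" using P B Q by (simp add: assoc_mult_mat[of _ n n _ n _ n])
  moreover have BkQ: "B ^\<^sub>m k * Q \<in> carrier_mat n n" by (meson B Q pow_carrier_mat mult_carrier_mat)
  ultimately have "mytr (A ^\<^sub>m k) = mytr ((B ^\<^sub>m k * Q) * P)"
    using tr_comm[OF P BkQ] by simp
  also have "(B ^\<^sub>m k * Q) * P = B ^\<^sub>m k" using P B Q QP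
    by (simp add: assoc_mult_mat[of _ n n _ n _ n])
  also have "mytr (B ^\<^sub>m k) = (\<Sum>i<n. B$$(i,i)^k)"
    unfolding mytr_def using ut_pow[OF B ut, of k] B by simp
  also have "\<dots> = (\<Sum>e\<leftarrow>es. e^k)"
  proof -
    have "es = map (\<lambda>i. B$$(i,i)) [0..<n]" using d B unfolding diag_mat_def by simp
    thus ?thesis by (simp add: sum_list_distinct_conv_sum_set lessThan_atLeast0 o_def sum.reindex)
  qed
  finally show ?thesis .
qed



lemma q_mono: fixes z w :: real assumes "0 \<le> z" "z \<le> w" shows "z * sqrt z \<le> w * sqrt w"
  using assms by (intro mult_mono) auto

lemma q_mult: fixes z w :: real assumes "0 \<le> z" "0 \<le> w" shows "(z*w) * sqrt (z*w) = (z * sqrt z) * (w * sqrt w)"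
  using assms by (simp add: real_sqrt_mult)

lemma core:
  fixes X Nn t m w :: real and k :: nat
  assumes X0: "X \<ge> 0" and N0: "Nn \<ge> 0" and XN: "X + Nn \<le> 2*m"
    and key: "X * sqrt X \<le> sqrt w * (t + Nn * sqrt Nn)"
    and tb: "t \<le> (6/2.2) * (m * sqrt m) / w^(2*k)"
    and w3: "w \<ge> 3" and k1: "k \<ge> 1" and m0: "m > 0"
  shows "X / m < 2 * (root 3 w / (1 + root 3 w) + 1 / w^k)"
proof (rule ccontr)
  define r where "r = root 3 w"
  define a where "a = r / (1 + r)"
  define h where "h = 1 / w^k"
  define M where "M = 2*m"
  assume "\<not> ?thesis"
  hence "X / m \<ge> 2 * (a + h)" unfolding a_def h_def r_def by simp
  hence XM: "X \<ge> M * (a+h)" using m0 unfolding M_def by (simp add: field_simps)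
  have M0: "M > 0" using m0 M_def by simp
  have r1: "r \<ge> 1" unfolding r_def using w3 by simp
  have r3: "r^3 = w" unfolding r_def using w3 by simp
  have h0: "h > 0" unfolding h_def using w3 by simp
  have a12: "a \<ge> 1/2" unfolding a_def using r1 by (simp add: field_simps)
  have a1: "a < 1" unfolding a_def using r1 by simp
  have XleM: "X \<le> M" using XN N0 M_def by simp
  have ah1: "a + h \<le> 1"
  proof (rule ccontr)
    assume "\<not> a + h \<le> 1"
    hence "M * (a+h) > M * 1" using M0 by (intro mult_strict_left_mono) auto
    thus False using XM XleM by simp
  qed
  have NnM: "Nn \<le> M * (1-a)"
  proof -
    have "M*h > 0" using h0 M0 by simp
    moreover have "M*(a+h) = M*a + M*h" "M*(1-a) = M - M*a" by (simp_all add: algebra_simps)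
    ultimately show ?thesis using XN XM M_def by (smt (verit))
  qed
  have sw: "sqrt w = r * sqrt r"
  proof -
    have "sqrt w = sqrt (r*r*r)" using r3 by (simp add: power3_eq_cube)
    also have "\<dots> = r * sqrt r" using r1 by (simp add: real_sqrt_mult)
    finally show ?thesis .
  qed
  have ident: "sqrt w * ((1-a) * sqrt (1-a)) = a * sqrt a"
  proof -
    define p where "p = 1/(1+r)"
    have 1: "1 - a = p" unfolding a_def p_def using r1 by (simp add: field_simps)
    have 2: "a = r * p" unfolding a_def p_def by simp
    have "sqrt w * (p * sqrt p) = (r*p) * sqrt (r*p)" by (simp add: sw real_sqrt_mult algebra_simps)
    thus ?thesis using 1 2 by simp
  qed
  have L: "(M * sqrt M) * ((a+h) * sqrt (a+h)) \<le> X * sqrt X"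
    using q_mono[of "M*(a+h)" X] q_mult[of M "a+h"] XM M0 a12 h0 by simp
  have R1: "Nn * sqrt Nn \<le> (M * sqrt M) * ((1-a) * sqrt (1-a))"
    using q_mono[OF N0 NnM] q_mult[of M "1-a"] M0 a1 by simp
  have tM: "t \<le> (6/(4.4 * sqrt 2)) * (M * sqrt M) * h^2"
  proof -
    have "M * sqrt M = (2 * sqrt 2) * (m * sqrt m)" unfolding M_def using m0 by (simp add: real_sqrt_mult)
    moreover have "h^2 = 1 / w^(2*k)" unfolding h_def by (simp add: power_mult power2_eq_square power_mult_distrib mult.commute power_one_over)
    ultimately have "(6/(4.4 * sqrt 2)) * (M * sqrt M) * h^2 = (6/2.2) * (m * sqrt m) / w^(2*k)"
      by simp
    thus ?thesis using tb by simp
  qed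
  define Q where "Q = M * sqrt M"
  have Q0: "Q > 0" unfolding Q_def using M0 by simp
  have sw0: "sqrt w > 0" using w3 by simp
  have "Q * ((a+h) * sqrt (a+h)) \<le> sqrt w * t + sqrt w * (Nn * sqrt Nn)"
    using L key unfolding Q_def by (simp add: distrib_left)
  also have "\<dots> \<le> sqrt w * ((6/(4.4 * sqrt 2)) * Q * h^2) + sqrt w * (Q * ((1-a) * sqrt (1-a)))"
    using tM R1 sw0 unfolding Q_def by (intro add_mono mult_left_mono) auto
  also have "\<dots> = Q * (sqrt w * (6/(4.4 * sqrt 2)) * h^2 + a * sqrt a)"
  proof -
    have e: "sqrt w * (Q * ((1-a)*sqrt(1-a))) = Q*(a*sqrt a)" using ident by (metis mult.left_commute)
    show ?thesis by (simp only: e distrib_left) (simp add: ac_simps)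
  qed
  finally have "(a+h) * sqrt (a+h) \<le> sqrt w * (6/(4.4 * sqrt 2)) * h^2 + a * sqrt a"
    using Q0 by simp
  moreover have "(a+h) * sqrt (a+h) \<ge> a * sqrt a + h * sqrt a"
  proof -
    have "sqrt a \<le> sqrt (a+h)" using h0 by simp
    hence "(a+h) * sqrt a \<le> (a+h) * sqrt (a+h)" using a12 h0 by (intro mult_left_mono) auto
    thus ?thesis by (simp add: algebra_simps)
  qed
  ultimately have "h * sqrt a \<le> sqrt w * (6/(4.4 * sqrt 2)) * h^2" by simp
  hence "h * sqrt a \<le> h * (sqrt w * (6/(4.4 * sqrt 2)) * h)" by (simp add: power2_eq_square ac_simps)
  hence "sqrt a \<le> sqrt w * (6/(4.4 * sqrt 2)) * h" using h0 by (simp only: mult_le_cancel_left_pos)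
  moreover have "sqrt a \<ge> 1 / sqrt 2" using a12 by (metis real_sqrt_divide real_sqrt_le_mono real_sqrt_one)
  ultimately have "1 \<le> sqrt w * (6/4.4) * h"
    by (simp add: field_simps)
  moreover have "sqrt w * h \<le> 1 / sqrt w"
  proof -
    have "w^1 \<le> w^k" by (rule power_increasing) (use k1 w3 in auto)
    hence "w^k \<ge> w" by simp
    hence "h \<le> 1/w" unfolding h_def using w3 by (simp add: frac_le)
    hence "sqrt w * h \<le> sqrt w * (1/w)" using sw0 by (intro mult_left_mono) auto
    also have "\<dots> = 1 / sqrt w" using w3 by (simp add: field_simps)
    finally show ?thesis .
  qed
  moreover have "1 / sqrt w \<le> 1 / sqrt 3" using w3 by (simp add: frac_le)
  moreover have "sqrt 3 > (6/4.4::real)"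
    by (rule real_less_rsqrt) (simp add: power2_eq_square)
  ultimately have "1 \<le> (6/4.4) * (1 / sqrt 3)"
  proof -
    assume a1: "1 \<le> sqrt w * (6/4.4) * h" and a2: "sqrt w * h \<le> 1 / sqrt w"
      and a3: "1 / sqrt w \<le> 1 / sqrt 3"
    have "sqrt w * (6/4.4) * h = (6/4.4) * (sqrt w * h)" by simp
    also have "\<dots> \<le> (6/4.4) * (1 / sqrt 3)" using a2 a3 by simp
    finally show ?thesis by (rule order_trans[OF a1])
  qed
  moreover have "(6/4.4) * (1 / sqrt 3) < (1::real)"
    using \<open>sqrt 3 > (6/4.4::real)\<close> by (simp add: field_simps)
  ultimately show False by simp
qed



lemma amgm3: fixes f s :: real assumes "f \<ge> 0" "s \<ge> 0" shows "3 * f^2 * s \<le> 2 * f^3 + s^3"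
proof -
  have "2 * f^3 + s^3 - 3 * f^2 * s = (f-s)^2 * (2*f+s)" by (simp add: algebra_simps power2_eq_square power3_eq_cube)
  moreover have "(f-s)^2 * (2*f+s) \<ge> 0" using assms by simp
  ultimately show ?thesis by simp
qed

lemma power_mean:
  fixes f :: "nat \<Rightarrow> real" assumes pos: "\<And>i. i < l \<Longrightarrow> f i > 0"
  shows "(\<Sum>i<l. f i^2) * sqrt (\<Sum>i<l. f i^2) \<le> sqrt l * (\<Sum>i<l. f i^3)"
proof (cases "l = 0")
  case True then show ?thesis by simp
next
  case False
  define X where "X = (\<Sum>i<l. f i^2)"
  define C where "C = (\<Sum>i<l. f i^3)"
  define s where "s = sqrt (X / l)"
  have X0: "X \<ge> 0" unfolding X_def by (intro sum_nonneg) auto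
  have s0: "s \<ge> 0" unfolding s_def using X0 by simp
  have s2: "s^2 = X / l" unfolding s_def using X0 by simp
  have "(\<Sum>i<l. 3 * f i^2 * s) \<le> (\<Sum>i<l. 2 * f i^3 + s^3)"
    by (intro sum_mono amgm3) (use pos s0 in \<open>auto simp: less_imp_le\<close>)
  hence "3 * s * X \<le> 2 * C + l * s^3"
    unfolding X_def C_def by (simp add: sum.distrib sum_distrib_left sum_distrib_right algebra_simps)
  also have "l * s^3 = s * X" using s2 False by (simp add: power3_eq_cube power2_eq_square field_simps)
  finally have "s * X \<le> C" by linarith
  moreover have "s = sqrt X / sqrt l" unfolding s_def by (simp add: real_sqrt_divide)
  ultimately have "sqrt X * X \<le> sqrt l * C" using False by (simp add: field_simps)
  thus ?thesis unfolding X_def C_def by (simp add: mult.commute)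
qed

lemma mid:
  fixes f :: "nat \<Rightarrow> real"
  assumes ln: "l \<le> n" and pos: "\<And>i. i < l \<Longrightarrow> f i > 0"
  shows "\<exists>Nn\<ge>0. (\<Sum>i<l. f i^2) + Nn \<le> (\<Sum>i<n. f i^2) \<and>
    (\<Sum>i<l. f i^2) * sqrt (\<Sum>i<l. f i^2) \<le> sqrt l * ((\<Sum>i<n. f i^3) + Nn * sqrt Nn)"
proof -
  define P where "P = {i. i < n \<and> f i > 0}"
  define N where "N = {i. i < n \<and> f i < 0}"
  define Nn where "Nn = (\<Sum>i\<in>N. f i^2)"
  have fin: "finite P" "finite N" unfolding P_def N_def by auto
  have lP: "{..<l} \<subseteq> P" unfolding P_def using ln pos by auto
  have disj: "{..<l} \<inter> N = {}" unfolding N_def using pos by force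
  have PN: "P \<inter> N = {}" unfolding P_def N_def by auto
  have Nn0: "Nn \<ge> 0" unfolding Nn_def by (intro sum_nonneg) auto
  have A: "(\<Sum>i<l. f i^2) + Nn \<le> (\<Sum>i<n. f i^2)"
  proof -
    have "(\<Sum>i<l. f i^2) + Nn = (\<Sum>i\<in>{..<l} \<union> N. f i^2)"
      unfolding Nn_def by (rule sum.union_disjoint[symmetric]) (use fin disj in auto)
    also have "\<dots> \<le> (\<Sum>i<n. f i^2)"
      by (rule sum_mono2) (use ln in \<open>auto simp: N_def\<close>)
    finally show ?thesis .
  qed
  have C1: "(\<Sum>i<l. f i^3) \<le> (\<Sum>i\<in>P. f i^3)"
    by (rule sum_mono2) (use fin lP in \<open>auto simp: P_def\<close>)
  have C2: "(\<Sum>i<n. f i^3) = (\<Sum>i\<in>P. f i^3) + (\<Sum>i\<in>N. f i^3)"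
  proof -
    have "(\<Sum>i<n. f i^3) = (\<Sum>i\<in>P \<union> N. f i^3)"
      by (rule sum.mono_neutral_right) (auto simp: P_def N_def)
    also have "\<dots> = (\<Sum>i\<in>P. f i^3) + (\<Sum>i\<in>N. f i^3)"
      by (rule sum.union_disjoint) (use fin PN in auto)
    finally show ?thesis .
  qed
  have C3: "- (\<Sum>i\<in>N. f i^3) \<le> Nn * sqrt Nn"
  proof -
    have "- (\<Sum>i\<in>N. f i^3) = (\<Sum>i\<in>N. \<bar>f i\<bar> * f i^2)"
      unfolding sum_negf[symmetric] by (rule sum.cong) (auto simp: N_def power3_eq_cube power2_eq_square)
    also have "\<dots> \<le> (\<Sum>i\<in>N. sqrt Nn * f i^2)"
    proof (rule sum_mono)
      fix i assume i: "i \<in> N"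
      have "f i^2 \<le> Nn" unfolding Nn_def using fin i by (intro member_le_sum) auto
      hence "\<bar>f i\<bar> \<le> sqrt Nn" by (metis real_sqrt_abs real_sqrt_le_mono)
      thus "\<bar>f i\<bar> * f i^2 \<le> sqrt Nn * f i^2" by (intro mult_right_mono) auto
    qed
    also have "\<dots> = Nn * sqrt Nn" unfolding Nn_def by (simp add: sum_distrib_right mult.commute)
    finally show ?thesis .
  qed
  have "(\<Sum>i<l. f i^3) \<le> (\<Sum>i<n. f i^3) + Nn * sqrt Nn" using C1 C2 C3 by linarith
  hence "sqrt l * (\<Sum>i<l. f i^3) \<le> sqrt l * ((\<Sum>i<n. f i^3) + Nn * sqrt Nn)"
    by (intro mult_left_mono) auto
  with power_mean[of l f] pos have "(\<Sum>i<l. f i^2) * sqrt (\<Sum>i<l. f i^2) \<le> sqrt l * ((\<Sum>i<n. f i^3) + Nn * sqrt Nn)"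
    by (meson order_trans)
  with A Nn0 show ?thesis by blast
qed



lemma sum_indicator_card:
  fixes P :: "'a \<Rightarrow> bool" assumes "finite A"
  shows "(\<Sum>x\<in>A. if P x then 1 else 0 :: real) = real (card {x\<in>A. P x})"
proof -
  have "A \<inter> Collect P = {x\<in>A. P x}" by blast
  thus ?thesis using assms by (simp add: sum.If_cases)
qed

lemma pairs_card:
  "card {p \<in> {..<n} \<times> {..<n}. E (fst p) (snd p)} \<le> 2 * num_edges n E"
proof -
  define Pr where "Pr = {p \<in> {..<n} \<times> {..<n}. E (fst p) (snd p)}"
  define g where "g = (\<lambda>p::nat\<times>nat. {fst p, snd p})"
  have ge: "g ` Pr = graph_edges n E"
  proof
    show "g ` Pr \<subseteq> graph_edges n E"
    proof
      fix e assume "e \<in> g ` Pr"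
      then obtain i j where "e = {i,j}" "i<n" "j<n" "E i j" unfolding g_def Pr_def by auto
      thus "e \<in> graph_edges n E" unfolding graph_edges_def by blast
    qed
    show "graph_edges n E \<subseteq> g ` Pr"
    proof
      fix e assume "e \<in> graph_edges n E"
      then obtain i j where "e = {i,j}" "i<n" "j<n" "E i j" unfolding graph_edges_def by auto
      hence "e = g (i,j)" "(i,j) \<in> Pr" unfolding g_def Pr_def by auto
      thus "e \<in> g ` Pr" by blast
    qed
  qed
  have finE: "finite (graph_edges n E)" 
  proof -
    have "graph_edges n E \<subseteq> (\<lambda>p. {fst p, snd p}) ` ({..<n} \<times> {..<n})" unfolding graph_edges_def by force
    thus ?thesis by (rule finite_subset) auto
  qed
  have "Pr = (\<Union>e\<in>graph_edges n E. {p\<in>Pr. g p = e})" using ge by blast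
  hence "card Pr \<le> (\<Sum>e\<in>graph_edges n E. card {p\<in>Pr. g p = e})"
    using card_UN_le[OF finE, of "\<lambda>e. {p\<in>Pr. g p = e}"] by simp
  also have "\<dots> \<le> (\<Sum>e\<in>graph_edges n E. 2)"
  proof (rule sum_mono)
    fix e assume "e \<in> graph_edges n E"
    then obtain x y where e: "e = {x,y}" unfolding graph_edges_def by auto
    have "{p\<in>Pr. g p = e} \<subseteq> set [(x,y),(y,x)]" unfolding e g_def by (auto simp: doubleton_eq_iff)
    hence "card {p\<in>Pr. g p = e} \<le> card (set [(x,y),(y,x)])" by (intro card_mono) auto
    also have "\<dots> \<le> 2" using card_length[of "[(x,y),(y,x)]"] by simp
    finally show "card {p\<in>Pr. g p = e} \<le> 2" .
  qed
  finally show ?thesis unfolding Pr_def num_edges_def by (simp add: mult.commute)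
qed

lemma triples_card:
  assumes sg: "simple_graph n E"
  shows "card {p \<in> {..<n} \<times> {..<n} \<times> {..<n}. E (fst p) (fst (snd p)) \<and> E (fst (snd p)) (snd (snd p)) \<and> E (snd (snd p)) (fst p)}
     \<le> 6 * num_triangles n E"
proof -
  define T where "T = {p \<in> {..<n} \<times> {..<n} \<times> {..<n}. E (fst p) (fst (snd p)) \<and> E (fst (snd p)) (snd (snd p)) \<and> E (snd (snd p)) (fst p)}"
  define C where "C = {S. is_clique n E S \<and> card S = 3}"
  define g where "g = (\<lambda>p::nat\<times>nat\<times>nat. {fst p, fst (snd p), snd (snd p)})"
  have sym: "\<And>i j. i<n \<Longrightarrow> j<n \<Longrightarrow> E i j = E j i" and irr: "\<And>i. i<n \<Longrightarrow> \<not> E i i"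
    using sg unfolding simple_graph_def by auto
  have finC: "finite C"
  proof -
    have "C \<subseteq> Pow {0..<n}" unfolding C_def is_clique_def by auto
    thus ?thesis by (rule finite_subset) auto
  qed
  have gT: "g ` T \<subseteq> C"
  proof
    fix S assume "S \<in> g ` T"
    then obtain i j k where p: "(i,j,k) \<in> T" and S: "S = {i,j,k}" unfolding g_def by auto
    have ijk: "i<n" "j<n" "k<n" "E i j" "E j k" "E k i" using p unfolding T_def by auto
    have d: "i \<noteq> j" "j \<noteq> k" "i \<noteq> k" using ijk irr by auto
    have "is_clique n E S" unfolding is_clique_def S using ijk sym by auto
    moreover have "card S = 3" unfolding S using d by simp
    ultimately show "S \<in> C" unfolding C_def by simp
  qed
  have "T = (\<Union>S\<in>C. {p\<in>T. g p = S})" using gT by blast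
  hence "card T \<le> (\<Sum>S\<in>C. card {p\<in>T. g p = S})"
    using card_UN_le[OF finC, of "\<lambda>S. {p\<in>T. g p = S}"] by simp
  also have "\<dots> \<le> (\<Sum>S\<in>C. 6)"
  proof (rule sum_mono)
    fix S assume "S \<in> C"
    then obtain x y z where S: "S = {x,y,z}" "x \<noteq> y" "y \<noteq> z" "x \<noteq> z" unfolding C_def by (auto simp: card_3_iff)
    have "{p\<in>T. g p = S} \<subseteq> set [(x,y,z),(x,z,y),(y,x,z),(y,z,x),(z,x,y),(z,y,x)]"
    proof
      fix p assume p: "p \<in> {p\<in>T. g p = S}"
      obtain i j k where pe: "p = (i,j,k)" by (cases p) auto
      have ijk: "i<n" "j<n" "k<n" "E i j" "E j k" "E k i" using p unfolding T_def pe by auto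
      have d: "i \<noteq> j" "j \<noteq> k" "i \<noteq> k" using ijk irr by auto
      have eq: "{i,j,k} = {x,y,z}" using p unfolding pe g_def S by simp
      have m: "i \<in> {x,y,z}" "j \<in> {x,y,z}" "k \<in> {x,y,z}" using eq by blast+
      show "p \<in> set [(x,y,z),(x,z,y),(y,x,z),(y,z,x),(z,x,y),(z,y,x)]"
        unfolding pe using d S(2-4) m by auto
    qed
    hence "card {p\<in>T. g p = S} \<le> card (set [(x,y,z),(x,z,y),(y,x,z),(y,z,x),(z,x,y),(z,y,x)])"
      by (intro card_mono) auto
    also have "\<dots> \<le> 6" using card_length[of "[(x,y,z),(x,z,y),(y,x,z),(y,z,x),(z,x,y),(z,y,x)]"] by simp
    finally show "card {p\<in>T. g p = S} \<le> 6" .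
  qed
  finally show ?thesis unfolding T_def num_triangles_def C_def by (simp add: mult.commute)
qed



lemma proots_lin_prod: "proots (\<Prod>a\<leftarrow>es. [:-a,1:]) = mset (es :: real list)"
proof (induct es)
  case Nil then show ?case by simp
next
  case (Cons e es)
  have nz: "(\<Prod>a\<leftarrow>es. [:-a,1::real:]) \<noteq> 0" by (auto simp: prod_list_zero_iff)
  have "proots (\<Prod>a\<leftarrow>e#es. [:-a,1:]) = proots [:-e,1:] + proots (\<Prod>a\<leftarrow>es. [:-a,1:])"
    by (simp only: prod_list.Cons list.map) (rule proots_mult, simp, rule nz)
  also have "\<dots> = {#e#} + mset es" using Cons by simp
  finally show ?case by simp
qed

lemma adj_facts:
  assumes sg: "simple_graph n E"
  defines "L \<equiv> adj_eigs n E"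
  shows "length L = n"
    and "(\<Sum>i<n. (L!i)^2) \<le> 2 * real (num_edges n E)"
    and "(\<Sum>i<n. (L!i)^3) \<le> 6 * real (num_triangles n E)"
    and "\<And>i. i < n_pos n E \<Longrightarrow> L!i > 0"
    and "n_pos n E \<le> n"
proof -
  define A where "A = adj_mat n E"
  define a where "a = (\<lambda>i j. if E i j then 1 else 0 :: real)"
  have A: "A \<in> carrier_mat n n" unfolding A_def adj_mat_def by simp
  have Aij: "\<And>i j. i < n \<Longrightarrow> j < n \<Longrightarrow> A$$(i,j) = a i j" unfolding A_def adj_mat_def a_def by simp
  have sym: "\<And>i j. i<n \<Longrightarrow> j<n \<Longrightarrow> A$$(i,j) = A$$(j,i)"
    using sg unfolding simple_graph_def by (simp add: Aij a_def)
  obtain es where es: "char_poly A = (\<Prod>a\<leftarrow>es. [:-a,1:])" "length es = n"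
    using sym_char_poly_split[OF A sym] by blast
  have Ldef: "L = rev (sort es)"
    unfolding L_def adj_eigs_def A_def[symmetric] es(1) proots_lin_prod by simp
  have mL: "mset L = mset es" unfolding Ldef by simp
  show len: "length L = n" unfolding Ldef using es(2) by simp
  have pw: "\<And>k. (\<Sum>i<n. (L!i)^k) = mytr (A ^\<^sub>m k)"
  proof -
    fix k :: nat
    have "(\<Sum>i<n. (L!i)^k) = sum_list (map (\<lambda>x. x^k) L)"
      using len by (simp add: sum_list_sum_nth lessThan_atLeast0)
    also have "\<dots> = sum_list (map (\<lambda>x. x^k) es)"
      by (metis mL mset_map sum_mset_sum_list)
    also have "\<dots> = mytr (A ^\<^sub>m k)" using tr_pow_eigs[OF A es(1)] by simp
    finally show "(\<Sum>i<n. (L!i)^k) = mytr (A ^\<^sub>m k)" .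
  qed
  have A2: "A ^\<^sub>m 2 = A * A" using A by (simp add: numeral_2_eq_2)
  have A3: "A ^\<^sub>m 3 = A * A * A" using A by (simp add: numeral_3_eq_3)
  have AA: "A * A \<in> carrier_mat n n" using A by simp
  have tr2: "mytr (A ^\<^sub>m 2) = (\<Sum>i<n. \<Sum>j<n. a i j * a j i)"
  proof -
    have "mytr (A ^\<^sub>m 2) = (\<Sum>i<n. (A*A)$$(i,i))" unfolding A2 mytr_def using A by simp
    also have "\<dots> = (\<Sum>i<n. \<Sum>j<n. a i j * a j i)"
      by (intro sum.cong refl) (simp add: mult_entry[OF A A] Aij)
    finally show ?thesis .
  qed
  have tr3: "mytr (A ^\<^sub>m 3) = (\<Sum>i<n. \<Sum>j<n. \<Sum>k<n. a i j * a j k * a k i)"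
  proof -
    have "mytr (A ^\<^sub>m 3) = (\<Sum>i<n. (A*A*A)$$(i,i))" unfolding A3 mytr_def using A by simp
    also have "\<dots> = (\<Sum>i<n. \<Sum>k<n. (\<Sum>j<n. a i j * a j k) * a k i)"
      by (intro sum.cong refl) (simp add: mult_entry[OF AA A] mult_entry[OF A A] Aij)
    also have "\<dots> = (\<Sum>i<n. \<Sum>k<n. \<Sum>j<n. a i j * a j k * a k i)"
      by (simp add: sum_distrib_right)
    also have "\<dots> = (\<Sum>i<n. \<Sum>j<n. \<Sum>k<n. a i j * a j k * a k i)"
      by (intro sum.cong refl sum.swap)
    finally show ?thesis .
  qed
  have "(\<Sum>i<n. \<Sum>j<n. a i j * a j i) \<le> (\<Sum>i<n. \<Sum>j<n. a i j)"
    by (intro sum_mono) (auto simp: a_def)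
  also have "\<dots> = (\<Sum>p\<in>{..<n} \<times> {..<n}. if E (fst p) (snd p) then 1 else 0)"
    unfolding a_def by (simp add: sum.cartesian_product case_prod_beta)
  also have "\<dots> = real (card {p \<in> {..<n} \<times> {..<n}. E (fst p) (snd p)})"
    by (rule sum_indicator_card) simp
  also have "\<dots> \<le> 2 * real (num_edges n E)" using pairs_card[of n E] by linarith
  finally show "(\<Sum>i<n. (L!i)^2) \<le> 2 * real (num_edges n E)" using pw tr2 by simp
  have "(\<Sum>i<n. \<Sum>j<n. \<Sum>k<n. a i j * a j k * a k i)
      = (\<Sum>p\<in>{..<n} \<times> {..<n} \<times> {..<n}. if E (fst p) (fst (snd p)) \<and> E (fst (snd p)) (snd (snd p)) \<and> E (snd (snd p)) (fst p) then 1 else 0)"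
    unfolding a_def by (simp add: sum.cartesian_product case_prod_beta) (intro sum.cong refl, auto)
  also have "\<dots> = real (card {p \<in> {..<n} \<times> {..<n} \<times> {..<n}. E (fst p) (fst (snd p)) \<and> E (fst (snd p)) (snd (snd p)) \<and> E (snd (snd p)) (fst p)})"
    by (rule sum_indicator_card) simp
  also have "\<dots> \<le> 6 * real (num_triangles n E)" using triples_card[OF sg] by linarith
  finally show "(\<Sum>i<n. (L!i)^3) \<le> 6 * real (num_triangles n E)" using pw tr3 by simp
  have np: "n_pos n E = card {j. j < length L \<and> L!j > 0}"
    unfolding n_pos_def L_def[symmetric] by (rule length_filter_conv_card)
  have "card {j. j < length L \<and> L!j > 0} \<le> card {..<length L}" by (rule card_mono) auto
  thus "n_pos n E \<le> n" unfolding np using len by simp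
  have sw: "sorted_wrt (\<lambda>x y. y \<le> x) L" unfolding Ldef by (simp add: sorted_wrt_rev)
  show "\<And>i. i < n_pos n E \<Longrightarrow> L!i > 0"
  proof (rule ccontr)
    fix i assume i: "i < n_pos n E" and ni: "\<not> L!i > 0"
    have "{j. j < length L \<and> L!j > 0} \<subseteq> {..<i}"
    proof
      fix j assume j: "j \<in> {j. j < length L \<and> L!j > 0}"
      show "j \<in> {..<i}"
      proof (rule ccontr)
        assume "j \<notin> {..<i}"
        hence "i \<le> j" by simp
        hence "L!j \<le> L!i" using sorted_wrt_nth_less[OF sw, of i j] j by (cases "i = j") auto
        thus False using j ni by simp
      qed
    qed
    hence "n_pos n E \<le> i" unfolding np by (metis card_lessThan card_mono finite_lessThan)
    thus False using i by simp
  qed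
qed



theorem theorem1p4:
  fixes n :: nat and E :: "nat \<Rightarrow> nat \<Rightarrow> bool"
    and \<omega> k :: nat and \<epsilon> c :: real
  assumes "simple_graph n E"
    and "\<omega> \<ge> 3" and "\<epsilon> > 0" and "c > 0" and "k \<ge> 1"
    and "clique_number n E = \<omega>"
    and "real (num_triangles n E) \<le> c * real (num_edges n E) powr (1.5 - \<epsilon>)"
    and "real (num_edges n E) \<ge> (2.2 * c * real \<omega> ^ (2 * k)) powr (1 / \<epsilon>)"
  shows "Lambda n E (min (n_pos n E) \<omega>)
           < 2 * (root 3 (real \<omega>) / (1 + root 3 (real \<omega>)) + 1 / real \<omega> ^ k)"
proof -
  note sg = assms(1)
  define L where "L = adj_eigs n E"
  define l where "l = min (n_pos n E) \<omega>"
  define m where "m = real (num_edges n E)"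
  define t where "t = real (num_triangles n E)"
  define w where "w = real \<omega>"
  define X where "X = (\<Sum>i<l. (L!i)^2)"
  have w3: "w \<ge> 3" unfolding w_def using assms(2) by simp
  have ln: "l \<le> n" unfolding l_def using adj_facts(5)[OF sg] by simp
  have pos: "\<And>i. i < l \<Longrightarrow> (L!i) > 0" unfolding l_def L_def using adj_facts(4)[OF sg] by simp
  obtain Nn where Nn: "Nn \<ge> 0" "X + Nn \<le> (\<Sum>i<n. (L!i)^2)"
    "X * sqrt X \<le> sqrt l * ((\<Sum>i<n. (L!i)^3) + Nn * sqrt Nn)"
    using mid[OF ln, of "\<lambda>i. L!i"] pos unfolding X_def by blast
  have S2: "(\<Sum>i<n. (L!i)^2) \<le> 2*m" unfolding m_def L_def by (rule adj_facts(2)[OF sg])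
  have S3: "(\<Sum>i<n. (L!i)^3) \<le> 6*t" unfolding t_def L_def by (rule adj_facts(3)[OF sg])
  have X0: "X \<ge> 0" unfolding X_def by (intro sum_nonneg) auto
  have b0: "2.2 * c * w ^ (2 * k) > 0" using assms(4) w3 by simp
  have mb: "m \<ge> (2.2 * c * w ^ (2 * k)) powr (1 / \<epsilon>)" unfolding m_def w_def using assms(8) by simp
  have m0: "m > 0" using mb b0 by (smt (verit) powr_gt_zero)
  have mpe: "m powr \<epsilon> \<ge> 2.2 * c * w ^ (2 * k)"
  proof -
    have "((2.2 * c * w ^ (2 * k)) powr (1 / \<epsilon>)) powr \<epsilon> \<le> m powr \<epsilon>"
      using mb assms(3) by (intro powr_mono2) auto
    moreover have "((2.2 * c * w ^ (2 * k)) powr (1 / \<epsilon>)) powr \<epsilon> = 2.2 * c * w ^ (2 * k)"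
      using assms(3) b0 by (simp add: powr_powr)
    ultimately show ?thesis by simp
  qed
  have tb: "6*t \<le> (6/2.2) * (m * sqrt m) / w^(2*k)"
  proof -
    have "t \<le> c * m powr (1.5 - \<epsilon>)" using assms(7) unfolding t_def m_def by simp
    also have "m powr (1.5 - \<epsilon>) = (m * sqrt m) / m powr \<epsilon>"
    proof -
      have "m powr (1.5 - \<epsilon>) = m powr 1.5 / m powr \<epsilon>" by (rule powr_diff)
      moreover have "m powr 1.5 = m * sqrt m"
      proof -
        have "m powr 1.5 = m powr (1 + 1/2)" by simp
        also have "\<dots> = m powr 1 * m powr (1/2)" by (rule powr_add)
        also have "\<dots> = m * sqrt m" using m0 by (simp add: powr_half_sqrt)
        finally show ?thesis .
      qed
      ultimately show ?thesis by simp
    qed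
    also have "c * ((m * sqrt m) / m powr \<epsilon>) \<le> c * ((m * sqrt m) / (2.2 * c * w ^ (2 * k)))"
      using mpe b0 m0 assms(4) by (intro mult_left_mono divide_left_mono) auto
    also have "\<dots> = (1/2.2) * (m * sqrt m) / w^(2*k)" using assms(4) by simp
    finally show ?thesis by simp
  qed
  have key: "X * sqrt X \<le> sqrt w * (6*t + Nn * sqrt Nn)"
  proof (cases "l = 0")
    case True
    hence "X = 0" unfolding X_def by simp
    moreover have "0 \<le> sqrt w * (6*t + Nn * sqrt Nn)" using Nn(1) w3 unfolding t_def by simp
    ultimately show ?thesis by simp
  next
    case False
    have S30: "(\<Sum>i<n. (L!i)^3) + Nn * sqrt Nn \<ge> 0"
    proof -
      have "0 \<le> X * sqrt X" using X0 by simp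
      also have "\<dots> \<le> sqrt l * ((\<Sum>i<n. (L!i)^3) + Nn * sqrt Nn)" by (rule Nn(3))
      finally show ?thesis using False by (simp add: zero_le_mult_iff)
    qed
    have "X * sqrt X \<le> sqrt l * ((\<Sum>i<n. (L!i)^3) + Nn * sqrt Nn)" by (rule Nn(3))
    also have "\<dots> \<le> sqrt w * ((\<Sum>i<n. (L!i)^3) + Nn * sqrt Nn)"
      using S30 unfolding w_def l_def by (intro mult_right_mono) auto
    also have "\<dots> \<le> sqrt w * (6*t + Nn * sqrt Nn)"
      using S3 w3 by (intro mult_left_mono) auto
    finally show ?thesis .
  qed
  have "X / m < 2 * (root 3 w / (1 + root 3 w) + 1 / w^k)"
    by (rule core[OF X0 Nn(1) _ key tb w3 assms(5) m0]) (use Nn(2) S2 in linarith)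
  moreover have "Lambda n E l = X / m"
    unfolding Lambda_def s_sum_def X_def L_def m_def ..
  ultimately show ?thesis unfolding l_def w_def by simp
qed

end
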